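(* For an ideal $\mathcal{I}$ on $\omega$, the following are equivalent: (1) Player I does not have a winning strategy in the tallness* game with respect to $\mathcal{I}$; (2) for every sequence $\langle X_n:n\in\omega\rangle$ of elements of $\mathcal{I}^+$ there is $I\in\mathcal{I}$ such that $I\cap X_n$ is infinite for every $n\in\omega$.
   Context: Ideals on $\omega$ are assumed to contain all finite sets; $\mathcal{I}^+=\mathcal{P}(\omega)\setminus\mathcal{I}$. Tallness* game with respect to $\mathcal{I}$: at round $k$, Player I plays $n_k\in\omega$ with $n_0<n_1<\cdots$, then Player II plays $i_k\in\{0,1\}$. Player II wins iff either $\{n_k:k\in\omega\}\in\mathcal{I}$, or ($\{n_k:k\in\omega\}\in\mathcal{I}^+$ and $\{n_k:i_k=1\}$ is infinite and belongs to $\mathcal{I}$). *)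

theory Defs
  imports Main
begin

definition is_ideal :: "nat set set \<Rightarrow> bool" where
  "is_ideal J \<longleftrightarrow> (\<forall>A\<in>J. \<forall>B. B \<subseteq> A \<longrightarrow> B \<in> J)
                 \<and> (\<forall>A\<in>J. \<forall>B\<in>J. A \<union> B \<in> J)
                 \<and> (\<forall>A. finite A \<longrightarrow> A \<in> J)
                 \<and> UNIV \<notin> J"

text \<open>A strategy for Player I maps the history of Player II's moves (a list of bits)
  to Player I's next natural number. Given II's moves i, the k-th move of I is:\<close>
definition play_I :: "(bool list \<Rightarrow> nat) \<Rightarrow> (nat \<Rightarrow> bool) \<Rightarrow> nat \<Rightarrow> nat" where
  "play_I \<sigma> i k = \<sigma> (map i [0..<k])"

definition tall_II_wins :: "nat set set \<Rightarrow> (nat \<Rightarrow> nat) \<Rightarrow> (nat \<Rightarrow> bool) \<Rightarrow> bool" where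
  "tall_II_wins J n i \<longleftrightarrow>
     range n \<in> J \<or>
     (range n \<notin> J \<and> infinite {n k | k. i k} \<and> {n k | k. i k} \<in> J)"

definition tall_I_winning_strategy :: "nat set set \<Rightarrow> (bool list \<Rightarrow> nat) \<Rightarrow> bool" where
  "tall_I_winning_strategy J \<sigma> \<longleftrightarrow>
     (\<forall>i. strict_mono (play_I \<sigma> i) \<and> \<not> tall_II_wins J (play_I \<sigma> i) i)"

end

theory Submission
  imports Defs "HOL-Library.Infinite_Set" "HOL-Library.Countable" "HOL-Library.Nat_Bijection"
begin

lemma ideal_fin: "is_ideal J \<Longrightarrow> finite A \<Longrightarrow> A \<in> J"
  by (simp add: is_ideal_def)
lemma ideal_sub: "is_ideal J \<Longrightarrow> A \<in> J \<Longrightarrow> B \<subseteq> A \<Longrightarrow> B \<in> J"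
  unfolding is_ideal_def by blast
lemma ideal_un: "is_ideal J \<Longrightarrow> A \<in> J \<Longrightarrow> B \<in> J \<Longrightarrow> A \<union> B \<in> J"
  unfolding is_ideal_def by blast

primrec LL :: "(bool list \<Rightarrow> nat) \<Rightarrow> nat set \<Rightarrow> nat \<Rightarrow> bool list" where
  "LL \<sigma> A 0 = []"
| "LL \<sigma> A (Suc k) = LL \<sigma> A k @ [\<sigma> (LL \<sigma> A k) \<in> A]"

lemma dir1:
  assumes J: "is_ideal J"
    and H: "\<forall>X::nat\<Rightarrow>nat set. (\<forall>m. X m \<notin> J) \<longrightarrow> (\<exists>A\<in>J. \<forall>m. infinite (A \<inter> X m))"
  shows "\<not> tall_I_winning_strategy J \<sigma>"
proof
  assume W: "tall_I_winning_strategy J \<sigma>"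
  define X' where "X' s = range (\<lambda>j. \<sigma> (s @ replicate j False))" for s
  have X'notJ: "X' s \<notin> J" for s
  proof
    assume XJ: "X' s \<in> J"
    define i where "i k = (if k < length s then s!k else False)" for k
    have rn: "range (play_I \<sigma> i) \<notin> J" using W unfolding tall_I_winning_strategy_def tall_II_wins_def by blast
    have "range (play_I \<sigma> i) \<subseteq> play_I \<sigma> i ` {..<length s} \<union> X' s"
    proof
      fix x assume "x \<in> range (play_I \<sigma> i)"
      then obtain k where k: "x = play_I \<sigma> i k" by auto
      show "x \<in> play_I \<sigma> i ` {..<length s} \<union> X' s"
      proof (cases "k < length s")
        case True then show ?thesis using k by auto
      next
        case False
        have "map i [0..<k] = s @ replicate (k - length s) False"
        proof (rule nth_equalityI)
          show "length (map i [0..<k]) = length (s @ replicate (k - length s) False)" using False by simp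
          fix j assume "j < length (map i [0..<k])"
          then show "map i [0..<k] ! j = (s @ replicate (k - length s) False) ! j"
            using False by (auto simp: i_def nth_append)
        qed
        then show ?thesis using k by (auto simp: play_I_def X'_def)
      qed
    qed
    moreover have "play_I \<sigma> i ` {..<length s} \<union> X' s \<in> J"
      using ideal_un[OF J ideal_fin[OF J] XJ] by auto
    ultimately show False using rn J ideal_sub by blast
  qed
  define X where "X m = X' (from_nat m)" for m
  have "\<forall>m. X m \<notin> J" using X'notJ by (simp add: X_def)
  with H obtain A where AJ: "A \<in> J" and Ainf: "\<forall>m. infinite (A \<inter> X m)" by blast
  have Ainf': "infinite (A \<inter> X' s)" for s
    using Ainf[rule_format, of "to_nat s"] by (simp add: X_def)
  define i where "i k = (\<sigma> (LL \<sigma> A k) \<in> A)" for k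
  have mapi: "map i [0..<k] = LL \<sigma> A k" for k
    by (induction k) (auto simp: i_def)
  define n where "n = play_I \<sigma> i"
  have nk: "n k = \<sigma> (LL \<sigma> A k)" for k by (simp add: n_def play_I_def mapi)
  have sm: "strict_mono n" and nw: "\<not> tall_II_wins J n i"
    using W unfolding tall_I_winning_strategy_def n_def by auto
  have rn: "range n \<notin> J" using nw unfolding tall_II_wins_def by blast
  have Bsub: "{n k | k. i k} \<subseteq> A" by (auto simp: i_def nk)
  hence "{n k | k. i k} \<in> J" using J AJ ideal_sub by blast
  hence Bfin: "finite {n k | k. i k}" using nw rn unfolding tall_II_wins_def by blast
  have "{n k | k. i k} = n ` {k. i k}" by auto
  with Bfin have "finite {k. i k}"
    using finite_imageD[of n "{k. i k}"] strict_mono_on_imp_inj_on[of "{k. i k}" n] sm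
    by (metis inj_on_subset strict_mono_imp_inj_on subset_UNIV)
  then obtain K where K: "{k. i k} \<subseteq> {..<K}" using finite_nat_bounded by blast
  have LK: "LL \<sigma> A (K + j) = LL \<sigma> A K @ replicate j False" for j
  proof (induction j)
    case 0 then show ?case by simp
  next
    case (Suc j)
    have "\<not> i (K + j)" using K by auto
    then show ?case using Suc by (simp add: i_def replicate_append_same[symmetric])
  qed
  from Ainf'[of "LL \<sigma> A K"] have "A \<inter> X' (LL \<sigma> A K) \<noteq> {}" by auto
  then obtain j where "\<sigma> (LL \<sigma> A K @ replicate j False) \<in> A" by (auto simp: X'_def)
  hence "i (K + j)" by (simp add: i_def LK)
  thus False using K by auto
qed

fun hh :: "(nat \<Rightarrow> nat set) \<Rightarrow> bool list \<Rightarrow> nat" where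
  "hh X [] = (LEAST x. x \<in> X (fst (prod_decode 0)))"
| "hh X (b#r) = (LEAST x. x \<in> X (fst (prod_decode (length (filter id (b#r))))) \<and> hh X r < x)"

lemma dir2:
  assumes J: "is_ideal J" and XJ: "\<forall>m. X m \<notin> J"
    and H: "\<forall>A\<in>J. \<exists>m. finite (A \<inter> X m)"
  shows "tall_I_winning_strategy J (\<lambda>s. hh X (rev s))"
  unfolding tall_I_winning_strategy_def
proof (intro allI)
  fix i :: "nat \<Rightarrow> bool"
  define F where "F c = fst (prod_decode c)" for c
  define n where "n = play_I (\<lambda>s. hh X (rev s)) i"
  define c where "c k = length (filter id (map i [0..<k]))" for k
  have Xinf: "infinite (X m)" for m using XJ J ideal_fin by blast
  have ex: "\<exists>x. x \<in> X m \<and> a < x" for m a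
    using Xinf[of m] unfolding infinite_nat_iff_unbounded by blast
  have n0: "n 0 = (LEAST x. x \<in> X (F 0))" by (simp add: n_def play_I_def F_def)
  have nS: "n (Suc k) = (LEAST x. x \<in> X (F (c (Suc k))) \<and> n k < x)" for k
    by (simp add: n_def play_I_def F_def c_def rev_filter[symmetric])
  have c0: "c 0 = 0" by (simp add: c_def)
  have cS: "c (Suc k) = c k + (if i k then 1 else 0)" for k by (simp add: c_def)
  have inX: "n k \<in> X (F (c k))" for k
  proof (cases k)
    case 0 then show ?thesis using ex[of "F 0" 0] n0 c0 by (metis LeastI_ex)
  next
    case (Suc k')
    then show ?thesis using LeastI_ex[OF ex[of "F (c (Suc k'))" "n k'"]] nS by simp
  qed
  have inc: "n k < n (Suc k)" for k
    using LeastI_ex[OF ex[of "F (c (Suc k))" "n k"]] nS by simp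
  have leS: "x \<in> X (F (c (Suc k))) \<Longrightarrow> n k < x \<Longrightarrow> n (Suc k) \<le> x" for x k
    using nS by (simp add: Least_le)
  have sm: "strict_mono n" using inc by (simp add: strict_mono_Suc_iff)
  have cmono: "mono c" using cS by (intro mono_iff_le_Suc[THEN iffD2]) simp
  have cle: "c k \<le> k" for k by (induction k) (auto simp: cS c0)
  have nge: "k \<le> n k" for k using sm strict_mono_imp_increasing by blast
  show "strict_mono n \<and> \<not> tall_II_wins J n i"
  proof (cases "finite {k. i k}")
    case True
    then obtain K where K: "{k. i k} \<subseteq> {..<K}" using finite_nat_bounded by blast
    have cK: "K \<le> k \<Longrightarrow> c k = c K" for k
    proof (induction k rule: dec_induct)
      case (step k) then show ?case using K by (auto simp: cS)
    qed simp
    define m where "m = F (c K)"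
    have sub: "X m \<inter> {x. n K < x} \<subseteq> range n"
    proof
      fix x assume x: "x \<in> X m \<inter> {x. n K < x}"
      define S where "S = {k. K \<le> k \<and> n k < x}"
      have KS: "K \<in> S" using x by (simp add: S_def)
      have fS: "finite S"
        by (rule finite_subset[of _ "{..<x}"]) (auto simp: S_def intro: le_less_trans[OF nge])
      define k where "k = Max S"
      have kS: "k \<in> S" using KS fS unfolding k_def by (intro Max_in) auto
      have "Suc k \<notin> S" using fS k_def by (metis Max_ge Suc_n_not_le_n)
      hence "x \<le> n (Suc k)" using kS by (auto simp: S_def)
      moreover have "n (Suc k) \<le> x"
        using kS x cK[of "Suc k"] by (intro leS) (auto simp: S_def m_def)
      ultimately show "x \<in> range n" by (metis antisym rangeI)
    qed
    have rn: "range n \<notin> J"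
    proof
      assume "range n \<in> J"
      hence "(X m \<inter> {..n K}) \<union> range n \<in> J" using ideal_un[OF J ideal_fin[OF J]] by auto
      moreover have "X m \<subseteq> (X m \<inter> {..n K}) \<union> range n" using sub by auto
      ultimately show False using J XJ ideal_sub by blast
    qed
    have "{n k | k. i k} = n ` {k. i k}" by auto
    hence "finite {n k | k. i k}" using True by simp
    then show ?thesis using sm rn unfolding tall_II_wins_def by blast
  next
    case False
    have unb: "\<exists>k. N \<le> c k" for N
    proof (induction N)
      case 0 then show ?case by simp
    next
      case (Suc N)
      then obtain k where k: "N \<le> c k" by blast
      from False obtain k' where k': "i k'" "k \<le> k'"
        by (metis infinite_nat_iff_unbounded_le mem_Collect_eq)
      have "c k \<le> c k'" using cmono k' monoD by blast
      then have "Suc N \<le> c (Suc k')" using k k' cS by simp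
      then show ?case by blast
    qed
    have BnJ: "{n k | k. i k} \<notin> J"
    proof
      assume BJ: "{n k | k. i k} \<in> J"
      then obtain m where "finite ({n k | k. i k} \<inter> X m)" using H by blast
      then obtain N where N: "{n k | k. i k} \<inter> X m \<subseteq> {..<N}" using finite_nat_bounded by blast
      define c0 where "c0 = prod_encode (m, N)"
      have Fc0: "F c0 = m" by (simp add: F_def c0_def)
      have Nc0: "N \<le> c0" by (simp add: c0_def le_prod_encode_2)
      obtain k0 where k0: "Suc c0 \<le> c k0" using unb by blast
      then obtain k1 where k1: "k0 = Suc k1" using c0 by (cases k0) auto
      define k where "k = (LEAST k. c0 < c (Suc k))"
      have ck1: "c0 < c (Suc k)" using k0 k1 unfolding k_def by (metis LeastI Suc_le_eq)
      have ck2: "c k \<le> c0"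
      proof (cases k)
        case 0 then show ?thesis using c0 by simp
      next
        case (Suc k')
        then have "k' < k" by simp
        then have "\<not> c0 < c (Suc k')" unfolding k_def by (rule not_less_Least)
        then show ?thesis using Suc by simp
      qed
      have ik: "i k" and ckc: "c k = c0" using ck1 ck2 cS[of k] by (auto split: if_splits)
      have "n k \<in> {n k | k. i k} \<inter> X m" using ik inX[of k] ckc Fc0 by auto
      moreover have "N \<le> n k" using Nc0 ckc cle[of k] nge[of k] by simp
      ultimately show False using N by auto
    qed
    have "range n \<notin> J"
    proof
      assume "range n \<in> J"
      moreover have "{n k | k. i k} \<subseteq> range n" by auto
      ultimately show False using BnJ J ideal_sub by blast
    qed
    then show ?thesis using sm BnJ unfolding tall_II_wins_def by blast
  qed
qed

theorem mainTheorem15: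
  assumes "is_ideal J"
  shows "(\<not> (\<exists>\<sigma>. tall_I_winning_strategy J \<sigma>)) \<longleftrightarrow>
         (\<forall>X :: nat \<Rightarrow> nat set. (\<forall>m. X m \<notin> J) \<longrightarrow>
            (\<exists>A\<in>J. \<forall>m. infinite (A \<inter> X m)))"
proof
  assume N: "\<not> (\<exists>\<sigma>. tall_I_winning_strategy J \<sigma>)"
  show "\<forall>X :: nat \<Rightarrow> nat set. (\<forall>m. X m \<notin> J) \<longrightarrow> (\<exists>A\<in>J. \<forall>m. infinite (A \<inter> X m))"
  proof (intro allI impI, rule ccontr)
    fix X :: "nat \<Rightarrow> nat set"
    assume "\<forall>m. X m \<notin> J" "\<not> (\<exists>A\<in>J. \<forall>m. infinite (A \<inter> X m))"
    then have "tall_I_winning_strategy J (\<lambda>s. hh X (rev s))"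
      using assms by (intro dir2) auto
    then show False using N by blast
  qed
next
  assume "\<forall>X :: nat \<Rightarrow> nat set. (\<forall>m. X m \<notin> J) \<longrightarrow> (\<exists>A\<in>J. \<forall>m. infinite (A \<inter> X m))"
  then show "\<not> (\<exists>\<sigma>. tall_I_winning_strategy J \<sigma>)" using dir1 assms by blast
qed

end
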